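(* Let $\mathcal{F}$ be a family of finite lattices (considered up to isomorphism) that is closed under vertical sum and contains the $2$-element chain. Let $f(n)$ be the number of $n$-element lattices in $\mathcal{F}$, and let $N \ge 2$ be an integer constant. Then $f(n) \ge \Omega(c^n)$, where $c = f(N)^{1/(N-1)}$; that is, there is a constant $b>0$ such that $f(n) \ge b\,c^n$ for all sufficiently large $n$.
   Context: All lattices are finite, nonempty and unlabeled (counted up to isomorphism). The vertical sum $L+U$ of lattices $L$ and $U$ is the lattice obtained by identifying the top element of $L$ with the bottom element of $U$ (with $L$ below $U$). *)

theory Defs
  imports Complex_Main
begin

text \<open>A finite lattice is represented by its order relation R :: nat rel (a set of pairs);
  its carrier is Field R. Lattices are counted up to isomorphism.\<close>

definition fin_lattice :: "nat rel \<Rightarrow> bool" where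
  "fin_lattice R \<longleftrightarrow> finite (Field R) \<and> Field R \<noteq> {} \<and> partial_order_on (Field R) R \<and>
     (\<forall>x\<in>Field R. \<forall>y\<in>Field R.
        (\<exists>s\<in>Field R. (x,s)\<in>R \<and> (y,s)\<in>R \<and> (\<forall>z\<in>Field R. (x,z)\<in>R \<and> (y,z)\<in>R \<longrightarrow> (s,z)\<in>R)) \<and>
        (\<exists>i\<in>Field R. (i,x)\<in>R \<and> (i,y)\<in>R \<and> (\<forall>z\<in>Field R. (z,x)\<in>R \<and> (z,y)\<in>R \<longrightarrow> (z,i)\<in>R)))"

definition lat_iso :: "nat rel \<Rightarrow> nat rel \<Rightarrow> bool" where
  "lat_iso R S \<longleftrightarrow> (\<exists>g. bij_betw g (Field R) (Field S) \<and>
     (\<forall>x\<in>Field R. \<forall>y\<in>Field R. (x,y)\<in>R \<longleftrightarrow> (g x, g y)\<in>S))"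

definition lat_top :: "nat rel \<Rightarrow> nat" where
  "lat_top R = (THE t. t \<in> Field R \<and> (\<forall>x\<in>Field R. (x,t)\<in>R))"

definition lat_bot :: "nat rel \<Rightarrow> nat" where
  "lat_bot R = (THE b. b \<in> Field R \<and> (\<forall>x\<in>Field R. (b,x)\<in>R))"

text \<open>S is (a representation of) the vertical sum L + U: copies of L and U glued by
  identifying the top of L with the bottom of U, L below U.\<close>
definition is_vsum :: "nat rel \<Rightarrow> nat rel \<Rightarrow> nat rel \<Rightarrow> bool" where
  "is_vsum S L U \<longleftrightarrow> (\<exists>g h. inj_on g (Field L) \<and> inj_on h (Field U) \<and>
     g (lat_top L) = h (lat_bot U) \<and>
     g ` Field L \<inter> h ` Field U = {g (lat_top L)} \<and>
     S = {(g x, g y) | x y. (x,y) \<in> L} \<union> {(h x, h y) | x y. (x,y) \<in> U}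
         \<union> {(g x, h y) | x y. x \<in> Field L \<and> y \<in> Field U})"

definition lat_count :: "nat rel set \<Rightarrow> nat \<Rightarrow> nat" where
  "lat_count F n = card ((\<lambda>R. {S. lat_iso R S}) ` {R \<in> F. card (Field R) = n})"

end

theory Submission
  imports Defs
begin

lemma fl_refl: "fin_lattice R \<Longrightarrow> x \<in> Field R \<Longrightarrow> (x,x) \<in> R"
  unfolding fin_lattice_def partial_order_on_def preorder_on_def refl_on_def by blast
lemma fl_trans: "fin_lattice R \<Longrightarrow> (x,y) \<in> R \<Longrightarrow> (y,z) \<in> R \<Longrightarrow> (x,z) \<in> R"
  unfolding fin_lattice_def partial_order_on_def preorder_on_def by (meson transD)
lemma fl_antisym: "fin_lattice R \<Longrightarrow> (x,y) \<in> R \<Longrightarrow> (y,x) \<in> R \<Longrightarrow> x = y"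
  unfolding fin_lattice_def partial_order_on_def by (meson antisymD)
lemma fl_finite: "fin_lattice R \<Longrightarrow> finite (Field R)"
  unfolding fin_lattice_def by blast
lemma fl_ne: "fin_lattice R \<Longrightarrow> Field R \<noteq> {}"
  unfolding fin_lattice_def by blast

lemma fl_ub:
  assumes R: "fin_lattice R" and "finite A" "A \<noteq> {}" "A \<subseteq> Field R"
  shows "\<exists>s\<in>Field R. \<forall>x\<in>A. (x,s) \<in> R"
  using assms(2-4)
proof (induction A rule: finite_ne_induct)
  case (singleton x) then show ?case using fl_refl[OF R] by auto
next
  case (insert x A)
  then obtain s where s: "s \<in> Field R" "\<forall>y\<in>A. (y,s) \<in> R" by auto
  have "x \<in> Field R" using insert by auto
  then obtain j where j: "j \<in> Field R" "(x,j) \<in> R" "(s,j) \<in> R"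
    using R s(1) unfolding fin_lattice_def by blast
  show ?case using j s fl_trans[OF R] by blast
qed

lemma fl_lb:
  assumes R: "fin_lattice R" and "finite A" "A \<noteq> {}" "A \<subseteq> Field R"
  shows "\<exists>s\<in>Field R. \<forall>x\<in>A. (s,x) \<in> R"
  using assms(2-4)
proof (induction A rule: finite_ne_induct)
  case (singleton x) then show ?case using fl_refl[OF R] by auto
next
  case (insert x A)
  then obtain s where s: "s \<in> Field R" "\<forall>y\<in>A. (s,y) \<in> R" by auto
  have "x \<in> Field R" using insert by auto
  then obtain j where j: "j \<in> Field R" "(j,x) \<in> R" "(j,s) \<in> R"
    using R s(1) unfolding fin_lattice_def by blast
  show ?case using j s fl_trans[OF R] by blast
qed

lemma fl_top:
  assumes R: "fin_lattice R"
  shows "lat_top R \<in> Field R \<and> (\<forall>x\<in>Field R. (x, lat_top R) \<in> R)"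
proof -
  obtain t where t: "t \<in> Field R" "\<forall>x\<in>Field R. (x,t) \<in> R"
    using fl_ub[OF R fl_finite[OF R] fl_ne[OF R]] by blast
  have "lat_top R = t" unfolding lat_top_def
  proof (rule the_equality)
    show "t \<in> Field R \<and> (\<forall>x\<in>Field R. (x,t) \<in> R)" using t by blast
    fix u assume u: "u \<in> Field R \<and> (\<forall>x\<in>Field R. (x,u) \<in> R)"
    then have "(u,t) \<in> R" "(t,u) \<in> R" using t by blast+
    then show "u = t" using fl_antisym[OF R] by blast
  qed
  then show ?thesis using t by simp
qed

lemma fl_bot:
  assumes R: "fin_lattice R"
  shows "lat_bot R \<in> Field R \<and> (\<forall>x\<in>Field R. (lat_bot R, x) \<in> R)"
proof -
  obtain t where t: "t \<in> Field R" "\<forall>x\<in>Field R. (t,x) \<in> R"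
    using fl_lb[OF R fl_finite[OF R] fl_ne[OF R]] by blast
  have "lat_bot R = t" unfolding lat_bot_def
  proof (rule the_equality)
    show "t \<in> Field R \<and> (\<forall>x\<in>Field R. (t,x) \<in> R)" using t by blast
    fix u assume u: "u \<in> Field R \<and> (\<forall>x\<in>Field R. (u,x) \<in> R)"
    then have "(t,u) \<in> R" "(u,t) \<in> R" using t by blast+
    then show "u = t" using fl_antisym[OF R] by blast
  qed
  then show ?thesis using t by simp
qed

lemma lat_iso_refl: "lat_iso R R"
  unfolding lat_iso_def by (rule exI[of _ id]) auto

lemma lat_iso_sym: assumes "lat_iso R S" shows "lat_iso S R"
proof -
  obtain g where g: "bij_betw g (Field R) (Field S)" "\<forall>x\<in>Field R. \<forall>y\<in>Field R. (x,y)\<in>R \<longleftrightarrow> (g x, g y)\<in>S"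
    using assms unfolding lat_iso_def by blast
  let ?i = "inv_into (Field R) g"
  have b: "bij_betw ?i (Field S) (Field R)" using g(1) by (rule bij_betw_inv_into)
  have "\<forall>x\<in>Field S. \<forall>y\<in>Field S. (x,y)\<in>S \<longleftrightarrow> (?i x, ?i y)\<in>R"
  proof (intro ballI)
    fix x y assume xy: "x \<in> Field S" "y \<in> Field S"
    then have "?i x \<in> Field R" "?i y \<in> Field R" "g (?i x) = x" "g (?i y) = y"
      using b g(1) by (auto simp: bij_betw_def f_inv_into_f)
    then show "(x,y)\<in>S \<longleftrightarrow> (?i x, ?i y)\<in>R" using g(2) by metis
  qed
  then show ?thesis unfolding lat_iso_def using b by blast
qed

lemma lat_iso_trans: assumes "lat_iso R S" "lat_iso S T" shows "lat_iso R T"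
proof -
  obtain g where g: "bij_betw g (Field R) (Field S)" "\<forall>x\<in>Field R. \<forall>y\<in>Field R. (x,y)\<in>R \<longleftrightarrow> (g x, g y)\<in>S"
    using assms unfolding lat_iso_def by blast
  obtain h where h: "bij_betw h (Field S) (Field T)" "\<forall>x\<in>Field S. \<forall>y\<in>Field S. (x,y)\<in>S \<longleftrightarrow> (h x, h y)\<in>T"
    using assms unfolding lat_iso_def by blast
  have "bij_betw (h \<circ> g) (Field R) (Field T)" using g(1) h(1) by (rule bij_betw_trans)
  moreover have "\<forall>x\<in>Field R. \<forall>y\<in>Field R. (x,y)\<in>R \<longleftrightarrow> ((h\<circ>g) x, (h\<circ>g) y)\<in>T"
  proof (intro ballI)
    fix x y assume xy: "x \<in> Field R" "y \<in> Field R"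
    then have "g x \<in> Field S" "g y \<in> Field S" using g(1) by (auto simp: bij_betw_def)
    then show "(x,y)\<in>R \<longleftrightarrow> ((h\<circ>g) x, (h\<circ>g) y)\<in>T" using g(2) h(2) xy by simp
  qed
  ultimately show ?thesis unfolding lat_iso_def by blast
qed

lemma cls_eq: "lat_iso R S \<Longrightarrow> {T. lat_iso R T} = {T. lat_iso S T}"
  using lat_iso_trans lat_iso_sym by blast

lemma iso_down:
  assumes g: "bij_betw g (Field R) (Field S)" "\<forall>x\<in>Field R. \<forall>y\<in>Field R. (x,y)\<in>R \<longleftrightarrow> (g x, g y)\<in>S"
    and x: "x \<in> Field R"
  shows "g ` {y. (y,x) \<in> R} = {y. (y, g x) \<in> S}" "g ` {y. (x,y) \<in> R} = {y. (g x, y) \<in> S}"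
proof -
  show "g ` {y. (y,x) \<in> R} = {y. (y, g x) \<in> S}"
  proof
    show "g ` {y. (y,x) \<in> R} \<subseteq> {y. (y, g x) \<in> S}"
    proof
      fix z assume "z \<in> g ` {y. (y,x) \<in> R}"
      then obtain y where y: "(y,x) \<in> R" "z = g y" by blast
      have "y \<in> Field R" by (rule FieldI1[OF y(1)])
      then show "z \<in> {y. (y, g x) \<in> S}" using g(2) x y by blast
    qed
    show "{y. (y, g x) \<in> S} \<subseteq> g ` {y. (y,x) \<in> R}"
    proof
      fix y assume "y \<in> {y. (y, g x) \<in> S}"
      then have y: "(y, g x) \<in> S" "y \<in> Field S" by (auto intro: FieldI1)
      then obtain z where "z \<in> Field R" "y = g z" using g(1) by (auto simp: bij_betw_def)
      then show "y \<in> g ` {y. (y,x) \<in> R}" using g(2) x y by auto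
    qed
  qed
  show "g ` {y. (x,y) \<in> R} = {y. (g x, y) \<in> S}"
  proof
    show "g ` {y. (x,y) \<in> R} \<subseteq> {y. (g x, y) \<in> S}"
    proof
      fix z assume "z \<in> g ` {y. (x,y) \<in> R}"
      then obtain y where y: "(x,y) \<in> R" "z = g y" by blast
      have "y \<in> Field R" by (rule FieldI2[OF y(1)])
      then show "z \<in> {y. (g x, y) \<in> S}" using g(2) x y by blast
    qed
    show "{y. (g x, y) \<in> S} \<subseteq> g ` {y. (x,y) \<in> R}"
    proof
      fix y assume "y \<in> {y. (g x, y) \<in> S}"
      then have y: "(g x, y) \<in> S" "y \<in> Field S" by (auto intro: FieldI2)
      then obtain z where "z \<in> Field R" "y = g z" using g(1) by (auto simp: bij_betw_def)
      then show "y \<in> g ` {y. (x,y) \<in> R}" using g(2) x y by auto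
    qed
  qed
qed


locale vs =
  fixes S L U :: "nat rel" and g h :: "nat \<Rightarrow> nat"
  assumes L: "fin_lattice L" and U: "fin_lattice U"
    and ig: "inj_on g (Field L)" and ih: "inj_on h (Field U)"
    and glue: "g (lat_top L) = h (lat_bot U)"
    and inter: "g ` Field L \<inter> h ` Field U = {g (lat_top L)}"
    and Sdef: "S = {(g x, g y) | x y. (x,y) \<in> L} \<union> {(h x, h y) | x y. (x,y) \<in> U}
         \<union> {(g x, h y) | x y. x \<in> Field L \<and> y \<in> Field U}"
begin

abbreviation "tL \<equiv> lat_top L"
abbreviation "bU \<equiv> lat_bot U"
abbreviation "t \<equiv> g tL"

lemma tL: "tL \<in> Field L" "\<And>x. x \<in> Field L \<Longrightarrow> (x,tL) \<in> L" using fl_top[OF L] by auto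
lemma bU: "bU \<in> Field U" "\<And>x. x \<in> Field U \<Longrightarrow> (bU,x) \<in> U" using fl_bot[OF U] by auto

lemma gi: "a \<in> Field L \<Longrightarrow> b \<in> Field L \<Longrightarrow> g a = g b \<Longrightarrow> a = b"
  using ig inj_onD by metis
lemma hi: "a \<in> Field U \<Longrightarrow> b \<in> Field U \<Longrightarrow> h a = h b \<Longrightarrow> a = b"
  using ih inj_onD by metis

lemma meet: "a \<in> Field L \<Longrightarrow> b \<in> Field U \<Longrightarrow> g a = h b \<Longrightarrow> g a = t"
  using inter by blast

lemma FieldS: "Field S = g ` Field L \<union> h ` Field U"
proof
  show "Field S \<subseteq> g ` Field L \<union> h ` Field U"
    unfolding Sdef Field_def by (auto intro: FieldI1 FieldI2)
  show "g ` Field L \<union> h ` Field U \<subseteq> Field S"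
  proof
    fix z assume "z \<in> g ` Field L \<union> h ` Field U"
    then consider a where "a \<in> Field L" "z = g a" | a where "a \<in> Field U" "z = h a" by blast
    then show "z \<in> Field S"
    proof cases
      case 1 then have "(g a, g a) \<in> S" using fl_refl[OF L] unfolding Sdef by blast
      then show ?thesis using 1 by (auto intro: FieldI1)
    next
      case 2 then have "(h a, h a) \<in> S" using fl_refl[OF U] unfolding Sdef by blast
      then show ?thesis using 2 by (auto intro: FieldI1)
    qed
  qed
qed

lemma finS: "finite (Field S)"
  using FieldS fl_finite[OF L] fl_finite[OF U] by simp

lemma ordg: assumes "a \<in> Field L" "b \<in> Field L" shows "(g a, g b) \<in> S \<longleftrightarrow> (a,b) \<in> L"
proof
  assume "(a,b) \<in> L" then show "(g a, g b) \<in> S" unfolding Sdef by blast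
next
  assume "(g a, g b) \<in> S"
  then consider p q where "(p,q) \<in> L" "g a = g p" "g b = g q"
    | p q where "(p,q) \<in> U" "g a = h p" "g b = h q"
    | p q where "p \<in> Field L" "q \<in> Field U" "g a = g p" "g b = h q"
    unfolding Sdef by blast
  then show "(a,b) \<in> L"
  proof cases
    case 1 then have "p \<in> Field L" "q \<in> Field L" by (auto intro: FieldI1 FieldI2)
    then have "p = a" "q = b" using gi assms 1 by metis+
    then show ?thesis using 1 by simp
  next
    case 2 then have "p \<in> Field U" "q \<in> Field U" by (auto intro: FieldI1 FieldI2)
    have "g a = t" using meet[OF assms(1) \<open>p \<in> Field U\<close>] 2 by simp
    moreover have "g b = t" using meet[OF assms(2) \<open>q \<in> Field U\<close>] 2 by simp
    ultimately have "g a = t" "g b = t" by auto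
    then have "a = tL" "b = tL" by (metis gi assms tL(1))+
    then show ?thesis using fl_refl[OF L] tL by simp
  next
    case 3 then have "g b = t" using meet[OF assms(2) 3(2)] by simp
    then have "b = tL" by (metis gi assms tL(1))
    then show ?thesis using tL assms by simp
  qed
qed

lemma ordh: assumes "a \<in> Field U" "b \<in> Field U" shows "(h a, h b) \<in> S \<longleftrightarrow> (a,b) \<in> U"
proof
  assume "(a,b) \<in> U" then show "(h a, h b) \<in> S" unfolding Sdef by blast
next
  assume "(h a, h b) \<in> S"
  then consider p q where "(p,q) \<in> L" "h a = g p" "h b = g q"
    | p q where "(p,q) \<in> U" "h a = h p" "h b = h q"
    | p q where "p \<in> Field L" "q \<in> Field U" "h a = g p" "h b = h q"
    unfolding Sdef by blast
  then show "(a,b) \<in> U"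
  proof cases
    case 2 then have "p \<in> Field U" "q \<in> Field U" by (auto intro: FieldI1 FieldI2)
    then have "p = a" "q = b" using hi assms 2 by metis+
    then show ?thesis using 2 by simp
  next
    case 1 then have "p \<in> Field L" "q \<in> Field L" by (auto intro: FieldI1 FieldI2)
    then have "h a = t" "h b = t" using 1 meet assms by metis+
    then have "a = bU" "b = bU" by (metis hi assms bU(1) glue)+
    then show ?thesis using fl_refl[OF U] bU by simp
  next
    case 3 then have "h a = t" using meet[OF 3(1) assms(1)] by simp
    then have "a = bU" by (metis hi assms bU(1) glue)
    then show ?thesis using bU assms by simp
  qed
qed

lemma downg: assumes a: "a \<in> Field L" shows "{y. (y, g a) \<in> S} = g ` {p. (p,a) \<in> L}"
proof
  show "g ` {p. (p,a) \<in> L} \<subseteq> {y. (y, g a) \<in> S}" unfolding Sdef by blast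
  show "{y. (y, g a) \<in> S} \<subseteq> g ` {p. (p,a) \<in> L}"
  proof
    fix y assume "y \<in> {y. (y, g a) \<in> S}"
    then consider p q where "(p,q) \<in> L" "y = g p" "g a = g q"
      | p q where "(p,q) \<in> U" "y = h p" "g a = h q"
      | p q where "p \<in> Field L" "q \<in> Field U" "y = g p" "g a = h q"
      unfolding Sdef by blast
    then show "y \<in> g ` {p. (p,a) \<in> L}"
    proof cases
      case 1 then have "q \<in> Field L" by (auto intro: FieldI2)
      then have "q = a" using gi a 1 by metis
      then show ?thesis using 1 by blast
    next
      case 2 then have "q \<in> Field U" by (auto intro: FieldI2)
      then have "g a = t" using 2 meet a by auto
      then have aa: "a = tL" by (metis gi a tL(1))
      have "p \<in> Field U" "q \<in> Field U" using 2 by (auto intro: FieldI1 FieldI2)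
      then have "h q = t" using 2 \<open>g a = t\<close> by simp
      then have "q = bU" by (metis hi bU(1) glue \<open>q \<in> Field U\<close>)
      then have "p = bU" using 2 bU \<open>p \<in> Field U\<close> fl_antisym[OF U] by blast
      then have "y = g tL" using 2 glue by simp
      then show ?thesis using aa tL fl_refl[OF L] by auto
    next
      case 3 then have "g a = t" using meet[OF a 3(2)] by simp
      then have aa: "a = tL" by (metis gi a tL(1))
      then show ?thesis using 3 tL by auto
    qed
  qed
qed

lemma down_t: "{y. (y, t) \<in> S} = g ` Field L"
proof -
  have "{p. (p,tL) \<in> L} = Field L" using tL by (auto intro: FieldI1)
  then show ?thesis using downg[OF tL(1)] by simp
qed

lemma up_t: "{y. (t, y) \<in> S} = h ` Field U"
proof
  show "h ` Field U \<subseteq> {y. (t, y) \<in> S}"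
  proof
    fix y assume "y \<in> h ` Field U"
    then obtain a where a: "a \<in> Field U" "y = h a" by blast
    then have "(h bU, h a) \<in> S" using ordh[OF bU(1) a(1)] bU(2) by simp
    then show "y \<in> {y. (t, y) \<in> S}" using a glue by simp
  qed
  show "{y. (t, y) \<in> S} \<subseteq> h ` Field U"
  proof
    fix y assume "y \<in> {y. (t, y) \<in> S}"
    then consider p q where "(p,q) \<in> L" "t = g p" "y = g q"
      | p q where "(p,q) \<in> U" "t = h p" "y = h q"
      | p q where "p \<in> Field L" "q \<in> Field U" "t = g p" "y = h q"
      unfolding Sdef by blast
    then show "y \<in> h ` Field U"
    proof cases
      case 1 then have "p \<in> Field L" by (auto intro: FieldI1)
      then have "p = tL" using gi tL(1) 1 by metis
      then have "(tL, q) \<in> L" "q \<in> Field L" using 1 by (auto intro: FieldI2)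
      then have "q = tL" using tL fl_antisym[OF L] by blast
      then have "y = h bU" using 1 glue by simp
      then show ?thesis using bU by blast
    next
      case 2 then show ?thesis by (auto intro: FieldI2)
    next
      case 3 then show ?thesis by auto
    qed
  qed
qed

lemma down_fin: "finite {y. (y, x) \<in> S}"
  by (rule finite_subset[OF _ finS]) (auto intro: FieldI1)

lemma charac: assumes "x \<in> Field S" shows "card {y. (y, x) \<in> S} = card (Field L) \<longleftrightarrow> x = t"
proof
  assume x: "x = t"
  show "card {y. (y, x) \<in> S} = card (Field L)" unfolding x down_t using ig by (simp add: card_image)
next
  assume c: "card {y. (y, x) \<in> S} = card (Field L)"
  from assms consider a where "a \<in> Field L" "x = g a" | a where "a \<in> Field U" "x = h a" "x \<notin> g ` Field L"
    unfolding FieldS by blast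
  then show "x = t"
  proof cases
    case 1
    have sub: "{p. (p,a) \<in> L} \<subseteq> Field L" by (auto intro: FieldI1)
    have "card {p. (p,a) \<in> L} = card (Field L)"
      using c 1 downg[OF 1(1)] card_image[OF inj_on_subset[OF ig sub]] by simp
    then have "{p. (p,a) \<in> L} = Field L" using card_subset_eq[OF fl_finite[OF L] sub] by simp
    then have "(tL, a) \<in> L" using tL by auto
    then have "a = tL" using tL 1 fl_antisym[OF L] by blast
    then show ?thesis using 1 by simp
  next
    case 2
    have "(x,x) \<in> S" using ordh[OF 2(1) 2(1)] fl_refl[OF U 2(1)] 2(2) by simp
    moreover have "\<forall>z\<in>g ` Field L. (z,x) \<in> S" using 2(1,2) unfolding Sdef by blast
    ultimately have "insert x (g ` Field L) \<subseteq> {y. (y, x) \<in> S}" by blast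
    then have "card (insert x (g ` Field L)) \<le> card {y. (y, x) \<in> S}"
      using down_fin by (rule card_mono[rotated])
    moreover have "card (insert x (g ` Field L)) = card (Field L) + 1"
      using 2 fl_finite[OF L] ig by (simp add: card_image)
    ultimately show ?thesis using c by simp
  qed
qed

end

lemma vs_iso:
  assumes A: "vs S L U g h" and B: "vs S' L' U' g' h'"
    and c: "card (Field L) = card (Field L')" and iso: "lat_iso S S'"
  shows "lat_iso L L' \<and> lat_iso U U'"
proof -
  interpret A: vs S L U g h by (rule A)
  interpret B: vs S' L' U' g' h' by (rule B)
  obtain \<phi> where phi: "bij_betw \<phi> (Field S) (Field S')" "\<forall>x\<in>Field S. \<forall>y\<in>Field S. (x,y)\<in>S \<longleftrightarrow> (\<phi> x, \<phi> y)\<in>S'"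
    using iso unfolding lat_iso_def by blast
  have tS: "A.t \<in> Field S" using A.FieldS A.tL by auto
  have "card {y. (y, \<phi> A.t) \<in> S'} = card {y. (y, A.t) \<in> S}"
    using iso_down(1)[OF phi tS] phi(1) card_image[OF inj_on_subset[of \<phi> "Field S"]]
    by (metis (no_types, lifting) FieldI1 bij_betw_def mem_Collect_eq subsetI)
  also have "\<dots> = card (Field L')" using A.charac[OF tS] c by simp
  finally have "\<phi> A.t = B.t" using B.charac phi(1) tS by (auto simp: bij_betw_def)
  then have imgD: "\<phi> ` g ` Field L = g' ` Field L'" and imgU: "\<phi> ` h ` Field U = h' ` Field U'"
    using iso_down[OF phi tS] A.down_t B.down_t A.up_t B.up_t by auto
  have sg: "g ` Field L \<subseteq> Field S" and sh: "h ` Field U \<subseteq> Field S" using A.FieldS by auto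
  have "lat_iso L L'"
  proof -
    let ?\<psi> = "inv_into (Field L') g' \<circ> \<phi> \<circ> g"
    have b1: "bij_betw g (Field L) (g ` Field L)" using A.ig by (simp add: bij_betw_imageI)
    have b2: "bij_betw \<phi> (g ` Field L) (g' ` Field L')"
      using imgD bij_betw_subset[OF phi(1) sg] by simp
    have b3: "bij_betw (inv_into (Field L') g') (g' ` Field L') (Field L')"
      using B.ig by (simp add: bij_betw_imageI bij_betw_inv_into)
    have bij: "bij_betw ?\<psi> (Field L) (Field L')"
      using bij_betw_trans[OF bij_betw_trans[OF b1 b2] b3] by (simp add: comp_assoc)
    have "\<forall>x\<in>Field L. \<forall>y\<in>Field L. (x,y)\<in>L \<longleftrightarrow> (?\<psi> x, ?\<psi> y)\<in>L'"
    proof (intro ballI)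
      fix x y assume xy: "x \<in> Field L" "y \<in> Field L"
      have e: "\<And>z. z \<in> Field L \<Longrightarrow> g' (?\<psi> z) = \<phi> (g z) \<and> ?\<psi> z \<in> Field L'"
      proof -
        fix z assume z: "z \<in> Field L"
        then have "\<phi> (g z) \<in> g' ` Field L'" using imgD by blast
        then show "g' (?\<psi> z) = \<phi> (g z) \<and> ?\<psi> z \<in> Field L'" by (simp add: f_inv_into_f inv_into_into)
      qed
      have "(x,y)\<in>L \<longleftrightarrow> (g x, g y) \<in> S" using A.ordg xy by simp
      also have "\<dots> \<longleftrightarrow> (\<phi> (g x), \<phi> (g y)) \<in> S'" using phi(2) sg xy by auto
      also have "\<dots> \<longleftrightarrow> (g' (?\<psi> x), g' (?\<psi> y)) \<in> S'" using e xy by simp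
      also have "\<dots> \<longleftrightarrow> (?\<psi> x, ?\<psi> y) \<in> L'" using e xy by (intro B.ordg) auto
      finally show "(x,y)\<in>L \<longleftrightarrow> (?\<psi> x, ?\<psi> y)\<in>L'" .
    qed
    then show ?thesis unfolding lat_iso_def using bij by blast
  qed
  moreover have "lat_iso U U'"
  proof -
    let ?\<psi> = "inv_into (Field U') h' \<circ> \<phi> \<circ> h"
    have b1: "bij_betw h (Field U) (h ` Field U)" using A.ih by (simp add: bij_betw_imageI)
    have b2: "bij_betw \<phi> (h ` Field U) (h' ` Field U')"
      using imgU bij_betw_subset[OF phi(1) sh] by simp
    have b3: "bij_betw (inv_into (Field U') h') (h' ` Field U') (Field U')"
      using B.ih by (simp add: bij_betw_imageI bij_betw_inv_into)
    have bij: "bij_betw ?\<psi> (Field U) (Field U')"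
      using bij_betw_trans[OF bij_betw_trans[OF b1 b2] b3] by (simp add: comp_assoc)
    have "\<forall>x\<in>Field U. \<forall>y\<in>Field U. (x,y)\<in>U \<longleftrightarrow> (?\<psi> x, ?\<psi> y)\<in>U'"
    proof (intro ballI)
      fix x y assume xy: "x \<in> Field U" "y \<in> Field U"
      have e: "\<And>z. z \<in> Field U \<Longrightarrow> h' (?\<psi> z) = \<phi> (h z) \<and> ?\<psi> z \<in> Field U'"
      proof -
        fix z assume z: "z \<in> Field U"
        then have "\<phi> (h z) \<in> h' ` Field U'" using imgU by blast
        then show "h' (?\<psi> z) = \<phi> (h z) \<and> ?\<psi> z \<in> Field U'" by (simp add: f_inv_into_f inv_into_into)
      qed
      have "(x,y)\<in>U \<longleftrightarrow> (h x, h y) \<in> S" using A.ordh xy by simp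
      also have "\<dots> \<longleftrightarrow> (\<phi> (h x), \<phi> (h y)) \<in> S'" using phi(2) sh xy by auto
      also have "\<dots> \<longleftrightarrow> (h' (?\<psi> x), h' (?\<psi> y)) \<in> S'" using e xy by simp
      also have "\<dots> \<longleftrightarrow> (?\<psi> x, ?\<psi> y) \<in> U'" using e xy by (intro B.ordh) auto
      finally show "(x,y)\<in>U \<longleftrightarrow> (?\<psi> x, ?\<psi> y)\<in>U'" .
    qed
    then show ?thesis unfolding lat_iso_def using bij by blast
  qed
  ultimately show ?thesis by simp
qed


context vs begin
lemma card_S: "card (Field S) = card (Field L) + card (Field U) - 1"
proof -
  have fL: "finite (g ` Field L)" "finite (h ` Field U)" using fl_finite[OF L] fl_finite[OF U] by auto
  have "card (g ` Field L) + card (h ` Field U) = card (Field S) + card (g ` Field L \<inter> h ` Field U)"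
    unfolding FieldS by (rule card_Un_Int[OF fL])
  moreover have "card (g ` Field L) = card (Field L)" using ig by (rule card_image)
  moreover have "card (h ` Field U) = card (Field U)" using ih by (rule card_image)
  ultimately show ?thesis using inter by simp
qed

lemma is_vsum: "is_vsum S L U"
  unfolding is_vsum_def using ig ih glue inter Sdef by blast
end

definition hh :: "nat rel \<Rightarrow> nat rel \<Rightarrow> nat \<Rightarrow> nat" where
  "hh L U x = (if x = lat_bot U then lat_top L else Suc (Max (Field L)) + x)"

definition V :: "nat rel \<Rightarrow> nat rel \<Rightarrow> nat rel" where
  "V L U = {(id x, id y) | x y. (x,y) \<in> L} \<union> {(hh L U x, hh L U y) | x y. (x,y) \<in> U}
         \<union> {(id x, hh L U y) | x y. x \<in> Field L \<and> y \<in> Field U}"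

lemma V_vs:
  assumes L: "fin_lattice L" and U: "fin_lattice U"
  shows "vs (V L U) L U id (hh L U)"
proof -
  have tL: "lat_top L \<in> Field L" using fl_top[OF L] by blast
  have bU: "lat_bot U \<in> Field U" using fl_bot[OF U] by blast
  have fin: "finite (Field L)" using fl_finite[OF L] .
  have big: "\<And>x. x \<noteq> lat_bot U \<Longrightarrow> hh L U x \<notin> Field L"
  proof
    fix x assume "x \<noteq> lat_bot U" "hh L U x \<in> Field L"
    then have "Suc (Max (Field L)) + x \<le> Max (Field L)" using Max_ge[OF fin] by (simp add: hh_def)
    then show False by simp
  qed
  have inj: "inj_on (hh L U) (Field U)"
  proof (rule inj_onI)
    fix x y assume xy: "x \<in> Field U" "y \<in> Field U" "hh L U x = hh L U y"
    show "x = y"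
    proof (cases "x = lat_bot U")
      case True
      then show ?thesis using xy big[of y] tL by (cases "y = lat_bot U") (auto simp: hh_def)
    next
      case False
      then show ?thesis using xy big[of x] tL by (cases "y = lat_bot U") (auto simp: hh_def)
    qed
  qed
  have inter: "id ` Field L \<inter> hh L U ` Field U = {id (lat_top L)}"
  proof
    show "id ` Field L \<inter> hh L U ` Field U \<subseteq> {id (lat_top L)}"
    proof
      fix z assume z: "z \<in> id ` Field L \<inter> hh L U ` Field U"
      then obtain x where x: "x \<in> Field U" "z = hh L U x" by blast
      have "x = lat_bot U" using big[of x] z x by auto
      then show "z \<in> {id (lat_top L)}" using x by (simp add: hh_def)
    qed
    show "{id (lat_top L)} \<subseteq> id ` Field L \<inter> hh L U ` Field U"
      using tL bU by (auto simp: hh_def image_iff intro!: bexI[of _ "lat_bot U"])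
  qed
  show ?thesis
    by (unfold_locales) (use L U inj inter in \<open>auto simp: V_def hh_def\<close>)
qed


definition cl :: "nat rel \<Rightarrow> nat rel set" where "cl R = {S. lat_iso R S}"

lemma lat_count_cl: "lat_count F n = card (cl ` {R \<in> F. card (Field R) = n})"
  unfolding lat_count_def cl_def by simp

lemma cl_eq_iff: "cl R = cl S \<longleftrightarrow> lat_iso R S"
proof
  assume "cl R = cl S"
  then have "S \<in> cl R" using lat_iso_refl unfolding cl_def by blast
  then show "lat_iso R S" unfolding cl_def by simp
next
  assume "lat_iso R S" then show "cl R = cl S" unfolding cl_def by (rule cls_eq)
qed

lemma iso_card: "lat_iso R S \<Longrightarrow> card (Field R) = card (Field S)"
  unfolding lat_iso_def by (metis bij_betw_same_card)

lemma relabel: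
  assumes "finite (Field R)" "card (Field R) = n"
  shows "\<exists>R'. R' \<subseteq> {0..<n} \<times> {0..<n} \<and> lat_iso R R'"
proof -
  obtain g where g: "bij_betw g (Field R) {0..<n}"
    using finite_same_card_bij[of "Field R" "{0..<n}"] assms by auto
  define R' where "R' = map_prod g g ` R"
  have FR: "Field R' = g ` Field R"
    unfolding R'_def Field_def by force
  have sub: "R' \<subseteq> {0..<n} \<times> {0..<n}"
  proof
    fix p assume "p \<in> R'"
    then obtain a b where ab: "(a,b) \<in> R" "p = (g a, g b)" unfolding R'_def by auto
    have "a \<in> Field R" "b \<in> Field R" using ab(1) by (auto intro: FieldI1 FieldI2)
    then show "p \<in> {0..<n} \<times> {0..<n}" using g ab(2) by (auto simp: bij_betw_def)
  qed
  have "bij_betw g (Field R) (Field R')" using g FR by (auto simp: bij_betw_def)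
  moreover have "\<forall>x\<in>Field R. \<forall>y\<in>Field R. (x,y)\<in>R \<longleftrightarrow> (g x, g y)\<in>R'"
  proof (intro ballI iffI)
    fix x y assume "x \<in> Field R" "y \<in> Field R" "(x,y) \<in> R"
    then show "(g x, g y) \<in> R'" unfolding R'_def by force
  next
    fix x y assume xy: "x \<in> Field R" "y \<in> Field R" "(g x, g y) \<in> R'"
    then obtain a b where ab: "(a,b) \<in> R" "g x = g a" "g y = g b" unfolding R'_def by auto
    have "a \<in> Field R" "b \<in> Field R" using ab(1) by (auto intro: FieldI1 FieldI2)
    then have "a = x" "b = y" using g xy ab by (metis bij_betw_def inj_onD)+
    then show "(x,y) \<in> R" using ab by simp
  qed
  ultimately show ?thesis using sub unfolding lat_iso_def by blast
qed

lemma fin_classes: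
  assumes lat: "\<forall>R\<in>F. fin_lattice R"
  shows "finite (cl ` {R \<in> F. card (Field R) = n})"
proof (rule finite_subset)
  show "cl ` {R \<in> F. card (Field R) = n} \<subseteq> cl ` Pow ({0..<n} \<times> {0..<n})"
  proof
    fix X assume "X \<in> cl ` {R \<in> F. card (Field R) = n}"
    then obtain R where R: "R \<in> F" "card (Field R) = n" "X = cl R" by blast
    then obtain R' where "R' \<subseteq> {0..<n} \<times> {0..<n}" "lat_iso R R'"
      using relabel[of R n] lat fl_finite by blast
    then show "X \<in> cl ` Pow ({0..<n} \<times> {0..<n})" using R cl_eq_iff by blast
  qed
  show "finite (cl ` Pow ({0..<n} \<times> {0..<n}))" by simp
qed

definition rep :: "nat rel set \<Rightarrow> nat rel set \<Rightarrow> nat rel" where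
  "rep F X = (SOME R. R \<in> F \<and> X = cl R)"

lemma rep:
  assumes "X \<in> cl ` {R \<in> F. card (Field R) = m}"
  shows "rep F X \<in> F \<and> card (Field (rep F X)) = m \<and> X = cl (rep F X)"
proof -
  obtain R0 where R0: "R0 \<in> F" "card (Field R0) = m" "X = cl R0" using assms by blast
  have "\<exists>R. R \<in> F \<and> X = cl R" using R0 by blast
  then have r: "rep F X \<in> F \<and> X = cl (rep F X)" unfolding rep_def by (rule someI_ex)
  then have "lat_iso R0 (rep F X)" using R0 cl_eq_iff by simp
  then show ?thesis using r R0 iso_card by simp
qed

lemma mult:
  assumes lat: "\<forall>R\<in>F. fin_lattice R"
    and vsum_closed: "\<forall>L\<in>F. \<forall>U\<in>F. \<forall>S. is_vsum S L U \<longrightarrow> S \<in> F"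
  shows "lat_count F m * lat_count F n \<le> lat_count F (m + n - 1)"
proof -
  define A where "A = cl ` {R \<in> F. card (Field R) = m}"
  define B where "B = cl ` {R \<in> F. card (Field R) = n}"
  define T where "T = cl ` {R \<in> F. card (Field R) = m + n - 1}"
  define \<Phi> where "\<Phi> = (\<lambda>(X,Y). cl (V (rep F X) (rep F Y)))"
  have into: "\<Phi> ` (A \<times> B) \<subseteq> T"
  proof
    fix Z assume "Z \<in> \<Phi> ` (A \<times> B)"
    then obtain X Y where XY: "X \<in> A" "Y \<in> B" "Z = cl (V (rep F X) (rep F Y))"
      unfolding \<Phi>_def by auto
    have rX: "rep F X \<in> F" "card (Field (rep F X)) = m" using rep XY(1) unfolding A_def by blast+
    have rY: "rep F Y \<in> F" "card (Field (rep F Y)) = n" using rep XY(2) unfolding B_def by blast+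
    interpret vs "V (rep F X) (rep F Y)" "rep F X" "rep F Y" id "hh (rep F X) (rep F Y)"
      using V_vs lat rX rY by blast
    have "V (rep F X) (rep F Y) \<in> F" using vsum_closed rX rY is_vsum by blast
    moreover have "card (Field (V (rep F X) (rep F Y))) = m + n - 1" using card_S rX rY by simp
    ultimately show "Z \<in> T" unfolding T_def using XY(3) by blast
  qed
  have inj: "inj_on \<Phi> (A \<times> B)"
  proof (rule inj_onI, clarify)
    fix X Y X' Y' assume XY: "X \<in> A" "Y \<in> B" "X' \<in> A" "Y' \<in> B"
      and eq: "\<Phi> (X,Y) = \<Phi> (X',Y')"
    have rX: "rep F X \<in> F" "card (Field (rep F X)) = m" "X = cl (rep F X)" using rep XY(1) unfolding A_def by blast+
    have rY: "rep F Y \<in> F" "card (Field (rep F Y)) = n" "Y = cl (rep F Y)" using rep XY(2) unfolding B_def by blast+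
    have rX': "rep F X' \<in> F" "card (Field (rep F X')) = m" "X' = cl (rep F X')" using rep XY(3) unfolding A_def by blast+
    have rY': "rep F Y' \<in> F" "card (Field (rep F Y')) = n" "Y' = cl (rep F Y')" using rep XY(4) unfolding B_def by blast+
    have v1: "vs (V (rep F X) (rep F Y)) (rep F X) (rep F Y) id (hh (rep F X) (rep F Y))"
      using V_vs lat rX rY by blast
    have v2: "vs (V (rep F X') (rep F Y')) (rep F X') (rep F Y') id (hh (rep F X') (rep F Y'))"
      using V_vs lat rX' rY' by blast
    have "lat_iso (V (rep F X) (rep F Y)) (V (rep F X') (rep F Y'))"
      using eq cl_eq_iff unfolding \<Phi>_def by simp
    then have "lat_iso (rep F X) (rep F X') \<and> lat_iso (rep F Y) (rep F Y')"
      using vs_iso[OF v1 v2] rX rX' by simp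
    then show "X = X' \<and> Y = Y'" using rX rY rX' rY' cl_eq_iff by metis
  qed
  have "card (A \<times> B) \<le> card T"
    using card_inj_on_le[OF inj into] fin_classes[OF lat] unfolding T_def by blast
  then show ?thesis unfolding lat_count_cl A_def B_def T_def card_cartesian_product .
qed


theorem theorem2p3:
  fixes F :: "nat rel set" and N :: nat
  assumes lat: "\<forall>R\<in>F. fin_lattice R"
    and iso_closed: "\<forall>R S. R \<in> F \<longrightarrow> lat_iso R S \<longrightarrow> S \<in> F"
    and vsum_closed: "\<forall>L\<in>F. \<forall>U\<in>F. \<forall>S. is_vsum S L U \<longrightarrow> S \<in> F"
    and chain2: "{(0,0),(0,1),(1,1)} \<in> F"
    and N: "N \<ge> 2"
  shows "\<exists>b>0. \<forall>\<^sub>F n in sequentially.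
           real (lat_count F n) \<ge> b * (real (lat_count F N) powr (1 / (real N - 1))) ^ n"
proof -
  define f where "f = lat_count F"
  have mul: "\<And>m n. f m * f n \<le> f (m + n - 1)" unfolding f_def using mult[OF lat vsum_closed] .
  have f2: "f 2 \<ge> 1"
  proof -
    have "Field {(0::nat,0::nat),(0,1),(1,1)} = {0,1}" by (auto simp: Field_def)
    then have "cl {(0,0),(0,1),(1,1)} \<in> cl ` {R \<in> F. card (Field R) = 2}" using chain2 by auto
    then have "cl ` {R \<in> F. card (Field R) = 2} \<noteq> {}" by blast
    then have "card (cl ` {R \<in> F. card (Field R) = 2}) \<noteq> 0" using fin_classes[OF lat] by simp
    then show ?thesis unfolding f_def lat_count_cl by simp
  qed
  have step: "\<And>a. f a \<le> f (Suc a)"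
  proof -
    fix a
    have "f a \<le> f a * f 2" using f2 by simp
    also have "\<dots> \<le> f (a + 2 - 1)" by (rule mul)
    finally show "f a \<le> f (Suc a)" by simp
  qed
  have mono: "\<And>a b. a \<le> b \<Longrightarrow> f a \<le> f b"
    using step by (rule lift_Suc_mono_le)
  have pw: "\<And>k. k \<ge> 1 \<Longrightarrow> f N ^ k \<le> f (1 + k * (N - 1))"
  proof -
    fix k :: nat assume "k \<ge> 1"
    then show "f N ^ k \<le> f (1 + k * (N - 1))"
    proof (induction k rule: dec_induct)
      case base then show ?case using N by simp
    next
      case (step k)
      have "f N ^ Suc k = f N ^ k * f N" by simp
      also have "\<dots> \<le> f (1 + k * (N - 1)) * f N" using step.IH by simp
      also have "\<dots> \<le> f (1 + k * (N - 1) + N - 1)" by (rule mul)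
      also have "1 + k * (N - 1) + N - 1 = 1 + Suc k * (N - 1)" using N by simp
      finally show ?case .
    qed
  qed
  show ?thesis
  proof (cases "f N = 0")
    case True
    show ?thesis
    proof (rule exI[of _ 1], intro conjI)
      show "\<forall>\<^sub>F n in sequentially. real (lat_count F n) \<ge> 1 * (real (lat_count F N) powr (1 / (real N - 1))) ^ n"
        using eventually_ge_at_top[of 1] by eventually_elim (use True in \<open>simp add: f_def power_0_left\<close>)
    qed simp
  next
    case False
    define q where "q = real (f N)"
    have q1: "q \<ge> 1" using False unfolding q_def by simp
    show ?thesis
    proof (rule exI[of _ "1 / q"], intro conjI)
      show "1 / q > 0" using q1 by simp
      show "\<forall>\<^sub>F n in sequentially. real (lat_count F n) \<ge> 1 / q * (real (lat_count F N) powr (1 / (real N - 1))) ^ n"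
        using eventually_ge_at_top[of N]
      proof eventually_elim
        case (elim n)
        define k where "k = (n - 1) div (N - 1)"
        define r where "r = (n - 1) mod (N - 1)"
        have dm: "k * (N - 1) + r = n - 1" unfolding k_def r_def by (rule div_mult_mod_eq)
        have rl: "r < N - 1" unfolding r_def using N by simp
        have k1: "k \<ge> 1" unfolding k_def using N elim by (simp add: Suc_le_eq div_greater_zero_iff)
        have le1: "1 + k * (N - 1) \<le> n" using dm elim N by linarith
        have le2: "n \<le> (k + 1) * (N - 1)" using dm rl elim N by (simp add: algebra_simps)
        have Nr: "real N - 1 > 0" using N by simp
        have "real n \<le> (real k + 1) * (real N - 1)"
          using le2 N by (metis (mono_tags, lifting) of_nat_1 of_nat_add of_nat_diff of_nat_le_iff of_nat_mult le_trans one_le_numeral)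
        then have "real n / (real N - 1) \<le> real k + 1" using Nr by (simp add: divide_le_eq)
        then have e: "real n / (real N - 1) - 1 \<le> real k" by simp
        have "1 / q * (q powr (1 / (real N - 1))) ^ n = 1 / q * q powr (real n * (1 / (real N - 1)))"
          using q1 by (simp add: powr_power)
        also have "\<dots> = q powr (real n / (real N - 1) - 1)"
          using q1 by (simp add: powr_diff)
        also have "\<dots> \<le> q powr real k" using e q1 by (rule powr_mono)
        also have "\<dots> = q ^ k" using q1 by (simp add: powr_realpow)
        also have "\<dots> = real (f N ^ k)" unfolding q_def by simp
        also have "\<dots> \<le> real (f (1 + k * (N - 1)))" using pw[OF k1] by simp
        also have "\<dots> \<le> real (f n)" using mono[OF le1] by simp
        finally show ?case unfolding q_def f_def by simp
      qed
    qed
  qed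
qed

end
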